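(* Let $A$ be an artinian local ring with infinite residue field, $S$ a finitely generated standard $\mathbb N^d$-graded algebra over $A$, and let $0\to M'\to M\to M''\to0$ be an exact sequence of finitely generated $\mathbb N^d$-graded $S$-modules. Let $\mathbf x$ be a sequence of elements in $\bigcup_{i=1}^dS_i$. Then $\mathbf x$ is a mixed multiplicity system of $M$ if and only if $\mathbf x$ is a mixed multiplicity system of both $M'$ and $M''$.
   Context: $S$ standard: $S_{\mathbf 0}=A$, generated by $S_i:=S_{\mathbf e_i}$. $S_{++}=\bigoplus_{\mathbf n\ge\mathbf 1}S_{\mathbf n}$; for a graded module $F$, $\mathrm{Supp}_{++}F$ is the set of homogeneous primes $P$ of $S$ not containing $S_{++}$ with $F_P\ne0$ (dimension $-\infty$ if empty). A sequence $\mathbf x$ of elements of $\bigcup_jS_j$ is a mixed multiplicity system of $F$ if $\dim\mathrm{Supp}_{++}(F/\mathbf xF)\le0$ (with $\mathbf xF=0$ for empty $\mathbf x$). *)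

theory Defs
  imports "HOL-Algebra.Algebra"
begin

text \<open>Multidegrees in N^d are functions 'd => nat for a finite index type 'd (d = CARD('d)).\<close>

definition unitdeg :: "'d \<Rightarrow> ('d \<Rightarrow> nat)" where
  "unitdeg i = (\<lambda>j. if j = i then 1 else 0)"

definition degadd :: "('d \<Rightarrow> nat) \<Rightarrow> ('d \<Rightarrow> nat) \<Rightarrow> ('d \<Rightarrow> nat)" where
  "degadd m n = (\<lambda>i. m i + n i)"

definition graded_decomp :: "('a, 'm) ring_scheme \<Rightarrow> (('d::finite \<Rightarrow> nat) \<Rightarrow> 'a set) \<Rightarrow> bool" where
  "graded_decomp R G \<longleftrightarrow> (\<forall>n. additive_subgroup (G n) R) \<and>
     (\<forall>x\<in>carrier R. \<exists>!c. (\<forall>n. c n \<in> G n) \<and> finite {n. c n \<noteq> \<zero>\<^bsub>R\<^esub>}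
        \<and> x = finsum R c {n. c n \<noteq> \<zero>\<^bsub>R\<^esub>})"

definition hcomp :: "('a, 'm) ring_scheme \<Rightarrow> (('d::finite \<Rightarrow> nat) \<Rightarrow> 'a set) \<Rightarrow> ('d \<Rightarrow> nat) \<Rightarrow> 'a \<Rightarrow> 'a" where
  "hcomp R G n x = (THE c. (\<forall>n. c n \<in> G n) \<and> finite {n. c n \<noteq> \<zero>\<^bsub>R\<^esub>}
        \<and> x = finsum R c {n. c n \<noteq> \<zero>\<^bsub>R\<^esub>}) n"

definition graded_ring :: "'a ring \<Rightarrow> (('d::finite \<Rightarrow> nat) \<Rightarrow> 'a set) \<Rightarrow> bool" where
  "graded_ring S SG \<longleftrightarrow> cring S \<and> graded_decomp S SG \<and> \<one>\<^bsub>S\<^esub> \<in> SG (\<lambda>_. 0) \<and>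
     (\<forall>m n. \<forall>a\<in>SG m. \<forall>b\<in>SG n. a \<otimes>\<^bsub>S\<^esub> b \<in> SG (degadd m n))"

definition deg0_ring :: "'a ring \<Rightarrow> (('d::finite \<Rightarrow> nat) \<Rightarrow> 'a set) \<Rightarrow> 'a ring" where
  "deg0_ring S SG = S\<lparr>carrier := SG (\<lambda>_. 0)\<rparr>"

definition standard_graded :: "'a ring \<Rightarrow> (('d::finite \<Rightarrow> nat) \<Rightarrow> 'a set) \<Rightarrow> bool" where
  "standard_graded S SG \<longleftrightarrow> graded_ring S SG \<and>
     carrier S = generate_ring S (SG (\<lambda>_. 0) \<union> (\<Union>i. SG (unitdeg i)))"

definition fg_algebra_over_deg0 :: "'a ring \<Rightarrow> (('d::finite \<Rightarrow> nat) \<Rightarrow> 'a set) \<Rightarrow> bool" where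
  "fg_algebra_over_deg0 S SG \<longleftrightarrow>
     (\<exists>Gs. finite Gs \<and> Gs \<subseteq> carrier S \<and> carrier S = generate_ring S (SG (\<lambda>_. 0) \<union> Gs))"

definition artinian :: "('a, 'm) ring_scheme \<Rightarrow> bool" where
  "artinian R \<longleftrightarrow> (\<forall>f :: nat \<Rightarrow> 'a set. (\<forall>n. ideal (f n) R) \<and> (\<forall>n. f (Suc n) \<subseteq> f n)
       \<longrightarrow> (\<exists>N. \<forall>n\<ge>N. f n = f N))"

definition local_ring :: "('a, 'm) ring_scheme \<Rightarrow> bool" where
  "local_ring R \<longleftrightarrow> cring R \<and> (\<exists>!m. maximalideal m R)"

definition infinite_residue_field :: "('a, 'm) ring_scheme \<Rightarrow> bool" where
  "infinite_residue_field R \<longleftrightarrow> (\<forall>m. maximalideal m R \<longrightarrow> infinite (carrier (R Quot m)))"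

definition graded_module :: "'a ring \<Rightarrow> (('d::finite \<Rightarrow> nat) \<Rightarrow> 'a set)
    \<Rightarrow> ('a, 'b) module \<Rightarrow> (('d \<Rightarrow> nat) \<Rightarrow> 'b set) \<Rightarrow> bool" where
  "graded_module S SG M MG \<longleftrightarrow> module S M \<and> graded_decomp M MG \<and>
     (\<forall>m n. \<forall>a\<in>SG m. \<forall>x\<in>MG n. a \<odot>\<^bsub>M\<^esub> x \<in> MG (degadd m n))"

definition fg_module :: "'a ring \<Rightarrow> ('a, 'b) module \<Rightarrow> bool" where
  "fg_module S M \<longleftrightarrow> (\<exists>Gs. finite Gs \<and> Gs \<subseteq> carrier M \<and>
     carrier M = {finsum M (\<lambda>x. a x \<odot>\<^bsub>M\<^esub> x) Gs | a. a \<in> Gs \<rightarrow> carrier S})"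

definition graded_hom :: "'a ring \<Rightarrow> ('a, 'b) module \<Rightarrow> (('d \<Rightarrow> nat) \<Rightarrow> 'b set)
    \<Rightarrow> ('a, 'c) module \<Rightarrow> (('d \<Rightarrow> nat) \<Rightarrow> 'c set) \<Rightarrow> ('b \<Rightarrow> 'c) \<Rightarrow> bool" where
  "graded_hom S M MG N NG f \<longleftrightarrow> f \<in> carrier M \<rightarrow> carrier N \<and>
     (\<forall>x\<in>carrier M. \<forall>y\<in>carrier M. f (x \<oplus>\<^bsub>M\<^esub> y) = f x \<oplus>\<^bsub>N\<^esub> f y) \<and>
     (\<forall>a\<in>carrier S. \<forall>x\<in>carrier M. f (a \<odot>\<^bsub>M\<^esub> x) = a \<odot>\<^bsub>N\<^esub> f x) \<and>
     (\<forall>n. f ` MG n \<subseteq> NG n)"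

definition short_exact :: "('a, 'b) module \<Rightarrow> ('a, 'c) module \<Rightarrow> ('a, 'e) module
    \<Rightarrow> ('b \<Rightarrow> 'c) \<Rightarrow> ('c \<Rightarrow> 'e) \<Rightarrow> bool" where
  "short_exact M1 M M2 f g \<longleftrightarrow> inj_on f (carrier M1) \<and> g ` carrier M = carrier M2 \<and>
     f ` carrier M1 = {y \<in> carrier M. g y = \<zero>\<^bsub>M2\<^esub>}"

definition homog_ideal :: "'a ring \<Rightarrow> (('d::finite \<Rightarrow> nat) \<Rightarrow> 'a set) \<Rightarrow> 'a set \<Rightarrow> bool" where
  "homog_ideal S SG I \<longleftrightarrow> ideal I S \<and> (\<forall>x\<in>I. \<forall>n. hcomp S SG n x \<in> I)"

text \<open>S_{++} = direct sum of the S_n with n >= 1 (all coordinates positive).\<close>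
definition S_pp :: "'a ring \<Rightarrow> (('d::finite \<Rightarrow> nat) \<Rightarrow> 'a set) \<Rightarrow> 'a set" where
  "S_pp S SG = {x \<in> carrier S. \<forall>n. (\<exists>i. n i = 0) \<longrightarrow> hcomp S SG n x = \<zero>\<^bsub>S\<^esub>}"

definition seq_submod :: "'a ring \<Rightarrow> ('a, 'b) module \<Rightarrow> 'a list \<Rightarrow> 'b set" where
  "seq_submod S F xs = {finsum F (\<lambda>k. (xs ! k) \<odot>\<^bsub>F\<^esub> m k) {..<length xs} | m.
       m \<in> {..<length xs} \<rightarrow> carrier F}"

text \<open>Supp_{++}(F/N): homogeneous primes P not containing S_{++} with (F/N)_P nonzero,
  where (F/N)_P nonzero is unfolded as: some class [m] survives localisation,
  i.e. s m is not in N for every s outside P.\<close>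
definition supp_pp_quot :: "'a ring \<Rightarrow> (('d::finite \<Rightarrow> nat) \<Rightarrow> 'a set) \<Rightarrow> ('a, 'b) module
    \<Rightarrow> 'b set \<Rightarrow> 'a set set" where
  "supp_pp_quot S SG F N = {P. primeideal P S \<and> homog_ideal S SG P \<and> \<not> S_pp S SG \<subseteq> P \<and>
      (\<exists>m\<in>carrier F. \<forall>s\<in>carrier S - P. s \<odot>\<^bsub>F\<^esub> m \<notin> N)}"

text \<open>Krull dimension of a set of primes is at most k: every strict chain
  P_0 < ... < P_n inside it has length n <= k (the empty set has dimension -infinity).\<close>
definition dim_le :: "'a set set \<Rightarrow> nat \<Rightarrow> bool" where
  "dim_le Ps k \<longleftrightarrow> (\<forall>(c :: nat \<Rightarrow> 'a set) n. (\<forall>i\<le>n. c i \<in> Ps) \<and> (\<forall>i<n. c i \<subset> c (Suc i)) \<longrightarrow> n \<le> k)"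

definition mm_system :: "'a ring \<Rightarrow> (('d::finite \<Rightarrow> nat) \<Rightarrow> 'a set) \<Rightarrow> ('a, 'b) module
    \<Rightarrow> 'a list \<Rightarrow> bool" where
  "mm_system S SG F xs \<longleftrightarrow> dim_le (supp_pp_quot S SG F (seq_submod S F xs)) 0"

end

theory Submission imports Defs begin

inductive_set lcs :: "('a,'b,'m) module_scheme \<Rightarrow> 'a set \<Rightarrow> 'b set \<Rightarrow> 'b set \<Rightarrow> 'b set"
  for M P G N where
  base: "n \<in> N \<Longrightarrow> n \<in> lcs M P G N"
| gen: "a \<in> P \<Longrightarrow> g \<in> G \<Longrightarrow> a \<odot>\<^bsub>M\<^esub> g \<in> lcs M P G N"
| add: "x \<in> lcs M P G N \<Longrightarrow> y \<in> lcs M P G N \<Longrightarrow> x \<oplus>\<^bsub>M\<^esub> y \<in> lcs M P G N"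

definition subm :: "('a,'c) ring_scheme \<Rightarrow> ('a,'b,'m) module_scheme \<Rightarrow> 'b set \<Rightarrow> bool" where
  "subm R M N \<longleftrightarrow> N \<subseteq> carrier M \<and> \<zero>\<^bsub>M\<^esub> \<in> N \<and> (\<forall>x\<in>N. \<forall>y\<in>N. x \<oplus>\<^bsub>M\<^esub> y \<in> N)
     \<and> (\<forall>a\<in>carrier R. \<forall>x\<in>N. a \<odot>\<^bsub>M\<^esub> x \<in> N)"

context module
begin

lemma lcs_carrier:
  assumes "P \<subseteq> carrier R" "G \<subseteq> carrier M" "N \<subseteq> carrier M" "x \<in> lcs M P G N"
  shows "x \<in> carrier M"
  using assms(4) by induct (use assms in auto)

lemma lcs_mono:
  assumes "N \<subseteq> N'" "x \<in> lcs M P G N" shows "x \<in> lcs M P G N'"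
  using assms(2) by induct (use assms in \<open>auto intro: lcs.intros\<close>)

lemma lcs_empty:
  assumes "subm R M N" "x \<in> lcs M P {} N" shows "x \<in> N"
  using assms(2) by induct (use assms in \<open>auto simp: subm_def\<close>)

lemma lcs_insert:
  assumes "P \<subseteq> carrier R" "G \<subseteq> carrier M" "g1 \<in> carrier M" "subm R M N"
    "x \<in> lcs M P (insert g1 G) N"
  shows "x \<in> lcs M P G {n \<oplus>\<^bsub>M\<^esub> t \<odot>\<^bsub>M\<^esub> g1 | n t. n \<in> N \<and> t \<in> carrier R}"
  using assms(5)
proof induct
  case (base n)
  have "n = n \<oplus>\<^bsub>M\<^esub> \<zero> \<odot>\<^bsub>M\<^esub> g1" using base assms by (auto simp: subm_def)
  then show ?case using base by (auto intro!: lcs.base)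
next
  case (gen a g)
  show ?case
  proof (cases "g = g1")
    case True
    then have "a \<odot>\<^bsub>M\<^esub> g = \<zero>\<^bsub>M\<^esub> \<oplus>\<^bsub>M\<^esub> a \<odot>\<^bsub>M\<^esub> g1" using gen assms by auto
    then show ?thesis using gen assms by (auto simp: subm_def intro!: lcs.base)
  next
    case False
    then show ?thesis using gen by (auto intro: lcs.gen)
  qed
next
  case (add x y) then show ?case by (auto intro: lcs.add)
qed

lemma lcs_split:
  assumes "ideal P R" "G \<subseteq> carrier M" "g1 \<in> carrier M" "subm R M N"
    "x \<in> lcs M P (insert g1 G) N"
  shows "\<exists>a\<in>P. \<exists>y\<in>lcs M P G N. x = a \<odot>\<^bsub>M\<^esub> g1 \<oplus>\<^bsub>M\<^esub> y"
proof -
  have Pc: "P \<subseteq> carrier R" using assms(1) by (meson additive_subgroup.a_subset ideal.axioms(1))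
  have Nc: "N \<subseteq> carrier M" using assms(4) by (simp add: subm_def)
  have z: "\<zero>\<^bsub>M\<^esub> \<in> lcs M P G N" by (rule lcs.base) (use assms(4) in \<open>simp add: subm_def\<close>)
  have zP: "\<zero> \<in> P" using assms(1) by (simp add: additive_subgroup.zero_closed ideal.axioms(1))
  show ?thesis using assms(5)
  proof induct
    case (base n)
    have "n = \<zero> \<odot>\<^bsub>M\<^esub> g1 \<oplus>\<^bsub>M\<^esub> n" using base assms(3) Nc by auto
    moreover have "n \<in> lcs M P G N" using base by (rule lcs.base)
    ultimately show ?case using zP by blast
  next
    case (gen a g)
    show ?case
    proof (cases "g = g1")
      case True
      then have "a \<odot>\<^bsub>M\<^esub> g = a \<odot>\<^bsub>M\<^esub> g1 \<oplus>\<^bsub>M\<^esub> \<zero>\<^bsub>M\<^esub>" using gen assms(3) Pc by auto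
      then show ?thesis using gen z by blast
    next
      case False
      then have gG: "g \<in> G" using gen by auto
      have cg: "a \<odot>\<^bsub>M\<^esub> g \<in> carrier M" using gen gG assms(2) Pc by auto
      have "a \<odot>\<^bsub>M\<^esub> g = \<zero> \<odot>\<^bsub>M\<^esub> g1 \<oplus>\<^bsub>M\<^esub> a \<odot>\<^bsub>M\<^esub> g" using cg assms(3) by simp
      moreover have "a \<odot>\<^bsub>M\<^esub> g \<in> lcs M P G N" using gen gG by (simp add: lcs.gen)
      ultimately show ?thesis using zP by blast
    qed
  next
    case (add x y)
    from add obtain a y1 b y2 where h: "a \<in> P" "y1 \<in> lcs M P G N" "x = a \<odot>\<^bsub>M\<^esub> g1 \<oplus>\<^bsub>M\<^esub> y1"
      "b \<in> P" "y2 \<in> lcs M P G N" "y = b \<odot>\<^bsub>M\<^esub> g1 \<oplus>\<^bsub>M\<^esub> y2" by blast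
    have c: "a \<in> carrier R" "b \<in> carrier R" "y1 \<in> carrier M" "y2 \<in> carrier M"
      using h Pc lcs_carrier[OF Pc assms(2) Nc] by auto
    have "x \<oplus>\<^bsub>M\<^esub> y = (a \<oplus> b) \<odot>\<^bsub>M\<^esub> g1 \<oplus>\<^bsub>M\<^esub> (y1 \<oplus>\<^bsub>M\<^esub> y2)"
      using c assms(3) by (simp add: h smult_l_distr M.a_ac)
    moreover have "a \<oplus> b \<in> P" using h assms(1) by (simp add: additive_subgroup.a_closed ideal.axioms(1))
    moreover have "y1 \<oplus>\<^bsub>M\<^esub> y2 \<in> lcs M P G N" using h by (simp add: lcs.add)
    ultimately show ?case by blast
  qed
qed


lemma subm_I:
  assumes "N \<subseteq> carrier M" "\<zero>\<^bsub>M\<^esub> \<in> N" "\<And>x y. x \<in> N \<Longrightarrow> y \<in> N \<Longrightarrow> x \<oplus>\<^bsub>M\<^esub> y \<in> N"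
    "\<And>a x. a \<in> carrier R \<Longrightarrow> x \<in> N \<Longrightarrow> a \<odot>\<^bsub>M\<^esub> x \<in> N"
  shows "subm R M N" using assms unfolding subm_def by blast

lemma subm_ext:
  assumes "subm R M N" "g1 \<in> carrier M"
  shows "subm R M {n \<oplus>\<^bsub>M\<^esub> t \<odot>\<^bsub>M\<^esub> g1 | n t. n \<in> N \<and> t \<in> carrier R}"
proof -
  let ?N = "{n \<oplus>\<^bsub>M\<^esub> t \<odot>\<^bsub>M\<^esub> g1 | n t. n \<in> N \<and> t \<in> carrier R}"
  have Nc: "N \<subseteq> carrier M" and z: "\<zero>\<^bsub>M\<^esub> \<in> N" and ad: "\<And>x y. x \<in> N \<Longrightarrow> y \<in> N \<Longrightarrow> x \<oplus>\<^bsub>M\<^esub> y \<in> N"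
    and sm: "\<And>a x. a \<in> carrier R \<Longrightarrow> x \<in> N \<Longrightarrow> a \<odot>\<^bsub>M\<^esub> x \<in> N"
    using assms(1) by (auto simp: subm_def)
  have f1: "?N \<subseteq> carrier M" using Nc assms(2) by auto
  moreover have f2: "\<zero>\<^bsub>M\<^esub> \<in> ?N"
  proof -
    have "\<zero>\<^bsub>M\<^esub> = \<zero>\<^bsub>M\<^esub> \<oplus>\<^bsub>M\<^esub> \<zero> \<odot>\<^bsub>M\<^esub> g1" using assms(2) by simp
    then show ?thesis using z by blast
  qed
  moreover have f3: "x \<oplus>\<^bsub>M\<^esub> y \<in> ?N" if xy: "x \<in> ?N" "y \<in> ?N" for x y
  proof -
    obtain n1 t1 n2 t2 where h: "x = n1 \<oplus>\<^bsub>M\<^esub> t1 \<odot>\<^bsub>M\<^esub> g1" "n1 \<in> N" "t1 \<in> carrier R"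
      "y = n2 \<oplus>\<^bsub>M\<^esub> t2 \<odot>\<^bsub>M\<^esub> g1" "n2 \<in> N" "t2 \<in> carrier R" using xy by blast
    have c: "n1 \<in> carrier M" "n2 \<in> carrier M" using h Nc by auto
    have "x \<oplus>\<^bsub>M\<^esub> y = (n1 \<oplus>\<^bsub>M\<^esub> n2) \<oplus>\<^bsub>M\<^esub> (t1 \<oplus> t2) \<odot>\<^bsub>M\<^esub> g1"
      using h c assms(2) by (simp add: smult_l_distr M.a_ac)
    then show ?thesis using h ad by blast
  qed
  moreover have f4: "a \<odot>\<^bsub>M\<^esub> x \<in> ?N" if ax: "a \<in> carrier R" "x \<in> ?N" for a x
  proof -
    obtain n t where h: "x = n \<oplus>\<^bsub>M\<^esub> t \<odot>\<^bsub>M\<^esub> g1" "n \<in> N" "t \<in> carrier R" using ax by blast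
    have c: "n \<in> carrier M" using h Nc by auto
    have "a \<odot>\<^bsub>M\<^esub> x = a \<odot>\<^bsub>M\<^esub> n \<oplus>\<^bsub>M\<^esub> (a \<otimes> t) \<odot>\<^bsub>M\<^esub> g1"
      using h c assms(2) ax by (simp add: smult_r_distr smult_assoc1)
    then show ?thesis using h sm ax by blast
  qed
  ultimately show ?thesis by (rule subm_I)
qed

lemma lcs_scale:
  assumes "ideal P R" "G \<subseteq> carrier M" "g1 \<in> carrier M" "subm R M N" "r \<in> carrier R"
    "\<forall>g\<in>G. r \<odot>\<^bsub>M\<^esub> g \<in> {n \<oplus>\<^bsub>M\<^esub> t \<odot>\<^bsub>M\<^esub> g1 | n t. n \<in> N \<and> t \<in> carrier R}"
    "y \<in> lcs M P G N"
  shows "r \<odot>\<^bsub>M\<^esub> y \<in> lcs M P {g1} N"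
proof -
  have Pc: "P \<subseteq> carrier R" using assms(1) by (meson additive_subgroup.a_subset ideal.axioms(1))
  have Nc: "N \<subseteq> carrier M" and sm: "\<And>a x. a \<in> carrier R \<Longrightarrow> x \<in> N \<Longrightarrow> a \<odot>\<^bsub>M\<^esub> x \<in> N"
    using assms(4) by (auto simp: subm_def)
  show ?thesis using assms(7)
  proof induct
    case (base n)
    then show ?case using sm assms(5) by (blast intro: lcs.base)
  next
    case (gen b g)
    obtain n t where h: "r \<odot>\<^bsub>M\<^esub> g = n \<oplus>\<^bsub>M\<^esub> t \<odot>\<^bsub>M\<^esub> g1" "n \<in> N" "t \<in> carrier R"
      using assms(6) gen by blast
    have c: "b \<in> carrier R" "g \<in> carrier M" "n \<in> carrier M" using gen Pc assms(2) h Nc by auto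
    have "r \<odot>\<^bsub>M\<^esub> (b \<odot>\<^bsub>M\<^esub> g) = (r \<otimes> b) \<odot>\<^bsub>M\<^esub> g"
      using c assms(5) by (simp add: smult_assoc1)
    also have "\<dots> = (b \<otimes> r) \<odot>\<^bsub>M\<^esub> g"
      using c assms(5) R.m_comm by simp
    also have "\<dots> = b \<odot>\<^bsub>M\<^esub> (r \<odot>\<^bsub>M\<^esub> g)"
      using c assms(5) by (simp add: smult_assoc1)
    also have "\<dots> = b \<odot>\<^bsub>M\<^esub> n \<oplus>\<^bsub>M\<^esub> (b \<otimes> t) \<odot>\<^bsub>M\<^esub> g1"
      using c h assms(3) by (simp add: smult_r_distr smult_assoc1)
    finally have e: "r \<odot>\<^bsub>M\<^esub> (b \<odot>\<^bsub>M\<^esub> g) = b \<odot>\<^bsub>M\<^esub> n \<oplus>\<^bsub>M\<^esub> (b \<otimes> t) \<odot>\<^bsub>M\<^esub> g1" .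
    have "b \<odot>\<^bsub>M\<^esub> n \<in> lcs M P {g1} N" using sm c h by (blast intro: lcs.base)
    moreover have "b \<otimes> t \<in> P" using gen h assms(1) by (simp add: ideal.I_r_closed)
    then have "(b \<otimes> t) \<odot>\<^bsub>M\<^esub> g1 \<in> lcs M P {g1} N" by (simp add: lcs.gen)
    ultimately show ?case unfolding e by (rule lcs.add)
  next
    case (add x y)
    have c: "x \<in> carrier M" "y \<in> carrier M" using add lcs_carrier[OF Pc assms(2) Nc] by auto
    then show ?case using add assms(5) by (simp add: smult_r_distr lcs.add)
  qed
qed

lemma nak:
  assumes "primeideal P R" "finite G" "G \<subseteq> carrier M" "subm R M N" "s \<in> carrier R" "s \<notin> P"
    "\<forall>g\<in>G. s \<odot>\<^bsub>M\<^esub> g \<in> lcs M P G N"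
  shows "\<exists>r\<in>carrier R. r \<notin> P \<and> (\<forall>g\<in>G. r \<odot>\<^bsub>M\<^esub> g \<in> N)"
  using assms(2,3,4,7)
proof (induction G arbitrary: N rule: finite_induct)
  case empty
  interpret P: primeideal P R by fact
  have "\<one> \<notin> P" using P.one_imp_carrier P.I_notcarr by blast
  then show ?case by auto
next
  case (insert g1 G N)
  interpret P: primeideal P R by fact
  have Pc: "P \<subseteq> carrier R" using P.a_subset .
  have g1c: "g1 \<in> carrier M" and Gc: "G \<subseteq> carrier M" using insert by auto
  have Nc: "N \<subseteq> carrier M" and sm: "\<And>a x. a \<in> carrier R \<Longrightarrow> x \<in> N \<Longrightarrow> a \<odot>\<^bsub>M\<^esub> x \<in> N"
    and ad: "\<And>x y. x \<in> N \<Longrightarrow> y \<in> N \<Longrightarrow> x \<oplus>\<^bsub>M\<^esub> y \<in> N"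
    using insert.prems(2) by (auto simp: subm_def)
  let ?N = "{n \<oplus>\<^bsub>M\<^esub> t \<odot>\<^bsub>M\<^esub> g1 | n t. n \<in> N \<and> t \<in> carrier R}"
  have sN: "subm R M ?N" using subm_ext[OF insert.prems(2) g1c] .
  have "\<forall>g\<in>G. s \<odot>\<^bsub>M\<^esub> g \<in> lcs M P G ?N"
    using insert.prems(3) lcs_insert[OF Pc Gc g1c insert.prems(2)] by blast
  from insert.IH[OF Gc sN this] obtain r' where r': "r' \<in> carrier R" "r' \<notin> P"
    "\<forall>g\<in>G. r' \<odot>\<^bsub>M\<^esub> g \<in> ?N" by blast
  obtain a y where ay: "a \<in> P" "y \<in> lcs M P G N" "s \<odot>\<^bsub>M\<^esub> g1 = a \<odot>\<^bsub>M\<^esub> g1 \<oplus>\<^bsub>M\<^esub> y"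
    using lcs_split[OF P.is_ideal Gc g1c insert.prems(2)] insert.prems(3) by blast
  have "r' \<odot>\<^bsub>M\<^esub> y \<in> lcs M P {g1} N"
    by (rule lcs_scale[OF P.is_ideal Gc g1c insert.prems(2) r'(1) r'(3) ay(2)])
  then obtain c z where cz: "c \<in> P" "z \<in> lcs M P {} N" "r' \<odot>\<^bsub>M\<^esub> y = c \<odot>\<^bsub>M\<^esub> g1 \<oplus>\<^bsub>M\<^esub> z"
    using lcs_split[OF P.is_ideal _ g1c insert.prems(2), of "{}"] by blast
  have zN: "z \<in> N" using lcs_empty[OF insert.prems(2) cz(2)] .
  have ac: "a \<in> carrier R" "c \<in> carrier R" using ay cz Pc by auto
  have yc: "y \<in> carrier M" using lcs_carrier[OF Pc Gc Nc ay(2)] .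
  have zc: "z \<in> carrier M" using zN Nc by auto
  define u where "u = r' \<otimes> s \<ominus> (r' \<otimes> a \<oplus> c)"
  have uc: "u \<in> carrier R" using u_def r' ac assms(5) by simp
  have wc: "(r' \<otimes> a \<oplus> c) \<odot>\<^bsub>M\<^esub> g1 \<in> carrier M" using r' ac g1c by simp
  have e1: "(r' \<otimes> s) \<odot>\<^bsub>M\<^esub> g1 = (r' \<otimes> a \<oplus> c) \<odot>\<^bsub>M\<^esub> g1 \<oplus>\<^bsub>M\<^esub> z"
  proof -
    have "(r' \<otimes> s) \<odot>\<^bsub>M\<^esub> g1 = r' \<odot>\<^bsub>M\<^esub> (a \<odot>\<^bsub>M\<^esub> g1 \<oplus>\<^bsub>M\<^esub> y)"
      using r' assms(5) g1c by (simp add: smult_assoc1 ay(3))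
    also have "\<dots> = (r' \<otimes> a) \<odot>\<^bsub>M\<^esub> g1 \<oplus>\<^bsub>M\<^esub> (c \<odot>\<^bsub>M\<^esub> g1 \<oplus>\<^bsub>M\<^esub> z)"
      using r' ac g1c yc by (simp add: smult_r_distr smult_assoc1 cz(3))
    also have "\<dots> = (r' \<otimes> a \<oplus> c) \<odot>\<^bsub>M\<^esub> g1 \<oplus>\<^bsub>M\<^esub> z"
      using r' ac g1c zc by (simp add: smult_l_distr M.a_assoc)
    finally show ?thesis .
  qed
  have ug: "u \<odot>\<^bsub>M\<^esub> g1 = z"
  proof -
    have "u \<odot>\<^bsub>M\<^esub> g1 = (r' \<otimes> s) \<odot>\<^bsub>M\<^esub> g1 \<oplus>\<^bsub>M\<^esub> \<ominus>\<^bsub>M\<^esub> ((r' \<otimes> a \<oplus> c) \<odot>\<^bsub>M\<^esub> g1)"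
      using r' ac g1c assms(5) by (simp add: u_def R.minus_eq smult_l_distr smult_l_minus)
    also have "\<dots> = z" unfolding e1 using wc zc
      by (metis M.a_comm M.add.inv_solve_right M.add.m_closed M.add.inv_closed M.a_assoc)
    finally show ?thesis .
  qed
  have "u \<notin> P"
  proof
    assume "u \<in> P"
    have "r' \<otimes> s = u \<oplus> (r' \<otimes> a \<oplus> c)" using r' ac assms(5)
      by (simp add: u_def R.minus_eq R.a_assoc R.l_neg)
    moreover have "r' \<otimes> a \<oplus> c \<in> P" using ay(1) cz(1) r' by (simp add: P.I_l_closed P.a_closed)
    ultimately have "r' \<otimes> s \<in> P" using \<open>u \<in> P\<close> by (simp add: P.a_closed)
    then show False using P.I_prime r' assms(5,6) by blast
  qed
  define r where "r = r' \<otimes> u"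
  have rc: "r \<in> carrier R" using r_def r' uc by simp
  have "r \<notin> P" using P.I_prime r' uc \<open>u \<notin> P\<close> r_def by blast
  moreover have "r \<odot>\<^bsub>M\<^esub> g1 \<in> N"
    using r' uc g1c zN sm by (simp add: r_def smult_assoc1 ug)
  moreover have "r \<odot>\<^bsub>M\<^esub> g \<in> N" if "g \<in> G" for g
  proof -
    obtain n t where h: "r' \<odot>\<^bsub>M\<^esub> g = n \<oplus>\<^bsub>M\<^esub> t \<odot>\<^bsub>M\<^esub> g1" "n \<in> N" "t \<in> carrier R"
      using r'(3) \<open>g \<in> G\<close> by blast
    have gc: "g \<in> carrier M" using that Gc by auto
    have nc: "n \<in> carrier M" using h Nc by auto
    have "r \<odot>\<^bsub>M\<^esub> g = (u \<otimes> r') \<odot>\<^bsub>M\<^esub> g" using r' uc by (simp add: r_def R.m_comm)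
    also have "\<dots> = u \<odot>\<^bsub>M\<^esub> n \<oplus>\<^bsub>M\<^esub> (u \<otimes> t) \<odot>\<^bsub>M\<^esub> g1"
      using r' uc gc nc h g1c by (simp add: smult_assoc1 smult_r_distr)
    also have "\<dots> = u \<odot>\<^bsub>M\<^esub> n \<oplus>\<^bsub>M\<^esub> t \<odot>\<^bsub>M\<^esub> z"
      using uc h g1c by (simp add: R.m_comm[of u t] smult_assoc1 ug)
    finally show ?thesis using sm ad h uc zN by simp
  qed
  ultimately show ?case using rc by blast
qed

end

locale smod = module R M for R :: "'a ring" (structure) and M :: "('a,'b) module"

context smod
begin

lemma seq_submodI:
  assumes "m \<in> {..<length xs} \<rightarrow> carrier M" "v = finsum M (\<lambda>k. (xs ! k) \<odot>\<^bsub>M\<^esub> m k) {..<length xs}"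
  shows "v \<in> seq_submod R M xs"
  unfolding seq_submod_def using assms by blast

lemma xs_carrier:
  assumes "set xs \<subseteq> carrier R" shows "seq_submod R M xs \<subseteq> carrier M"
proof
  fix v assume "v \<in> seq_submod R M xs"
  then obtain m where v: "v = finsum M (\<lambda>k. (xs ! k) \<odot>\<^bsub>M\<^esub> m k) {..<length xs}"
    "m \<in> {..<length xs} \<rightarrow> carrier M" unfolding seq_submod_def by blast
  have "(\<lambda>k. (xs ! k) \<odot>\<^bsub>M\<^esub> m k) \<in> {..<length xs} \<rightarrow> carrier M"
    using v(2) assms by (auto intro!: smult_closed)
  then show "v \<in> carrier M" using v(1) by simp
qed

lemma xs_zero:
  assumes "set xs \<subseteq> carrier R" shows "\<zero>\<^bsub>M\<^esub> \<in> seq_submod R M xs"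
proof -
  have "finsum M (\<lambda>k. (xs ! k) \<odot>\<^bsub>M\<^esub> (\<lambda>_. \<zero>\<^bsub>M\<^esub>) k) {..<length xs} = \<zero>\<^bsub>M\<^esub>"
    by (rule M.add.finprod_one_eqI) (use assms nth_mem in \<open>fastforce intro: smult_r_null\<close>)
  moreover have "(\<lambda>_. \<zero>\<^bsub>M\<^esub>) \<in> {..<length xs} \<rightarrow> carrier M" by simp
  ultimately show ?thesis by (intro seq_submodI[of "\<lambda>_. \<zero>\<^bsub>M\<^esub>"]) auto
qed

lemma xs_add:
  assumes "set xs \<subseteq> carrier R" "v \<in> seq_submod R M xs" "w \<in> seq_submod R M xs"
  shows "v \<oplus>\<^bsub>M\<^esub> w \<in> seq_submod R M xs"
proof -
  obtain m where v: "v = finsum M (\<lambda>k. (xs ! k) \<odot>\<^bsub>M\<^esub> m k) {..<length xs}"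
    "m \<in> {..<length xs} \<rightarrow> carrier M" using assms(2) unfolding seq_submod_def by blast
  obtain m' where w: "w = finsum M (\<lambda>k. (xs ! k) \<odot>\<^bsub>M\<^esub> m' k) {..<length xs}"
    "m' \<in> {..<length xs} \<rightarrow> carrier M" using assms(3) unfolding seq_submod_def by blast
  have c: "\<And>k. k < length xs \<Longrightarrow> xs ! k \<in> carrier R" using assms(1) by auto
  have "v \<oplus>\<^bsub>M\<^esub> w = finsum M (\<lambda>k. (xs ! k) \<odot>\<^bsub>M\<^esub> m k \<oplus>\<^bsub>M\<^esub> (xs ! k) \<odot>\<^bsub>M\<^esub> m' k) {..<length xs}"
    using v w c by (subst M.finsum_addf) (auto intro!: smult_closed)
  also have "\<dots> = finsum M (\<lambda>k. (xs ! k) \<odot>\<^bsub>M\<^esub> (\<lambda>k. m k \<oplus>\<^bsub>M\<^esub> m' k) k) {..<length xs}"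
  proof (rule M.finsum_cong')
    fix k assume "k \<in> {..<length xs}"
    then have "xs ! k \<in> carrier R" "m k \<in> carrier M" "m' k \<in> carrier M" using c v w by auto
    then show "(xs ! k) \<odot>\<^bsub>M\<^esub> m k \<oplus>\<^bsub>M\<^esub> (xs ! k) \<odot>\<^bsub>M\<^esub> m' k = (xs ! k) \<odot>\<^bsub>M\<^esub> (\<lambda>k. m k \<oplus>\<^bsub>M\<^esub> m' k) k"
      by (simp add: smult_r_distr)
  qed (use v w c in \<open>auto intro!: smult_closed\<close>)
  finally have eq: "v \<oplus>\<^bsub>M\<^esub> w = finsum M (\<lambda>k. (xs ! k) \<odot>\<^bsub>M\<^esub> (\<lambda>k. m k \<oplus>\<^bsub>M\<^esub> m' k) k) {..<length xs}" .
  moreover have "(\<lambda>k. m k \<oplus>\<^bsub>M\<^esub> m' k) \<in> {..<length xs} \<rightarrow> carrier M" using v(2) w(2) by auto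
  ultimately show ?thesis by (intro seq_submodI[of "\<lambda>k. m k \<oplus>\<^bsub>M\<^esub> m' k"]) auto
qed

lemma xs_smult:
  assumes "set xs \<subseteq> carrier R" "a \<in> carrier R" "v \<in> seq_submod R M xs"
  shows "a \<odot>\<^bsub>M\<^esub> v \<in> seq_submod R M xs"
proof -
  obtain m where v: "v = finsum M (\<lambda>k. (xs ! k) \<odot>\<^bsub>M\<^esub> m k) {..<length xs}"
    "m \<in> {..<length xs} \<rightarrow> carrier M" using assms(3) unfolding seq_submod_def by blast
  have c: "\<And>k. k < length xs \<Longrightarrow> xs ! k \<in> carrier R" using assms(1) by auto
  have "a \<odot>\<^bsub>M\<^esub> v = finsum M (\<lambda>k. a \<odot>\<^bsub>M\<^esub> ((xs ! k) \<odot>\<^bsub>M\<^esub> m k)) {..<length xs}"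
    unfolding v(1) using v c assms(2) by (subst finsum_smult_ldistr) (auto intro!: smult_closed)
  also have "\<dots> = finsum M (\<lambda>k. (xs ! k) \<odot>\<^bsub>M\<^esub> (\<lambda>k. a \<odot>\<^bsub>M\<^esub> m k) k) {..<length xs}"
  proof (rule M.finsum_cong')
    show "(\<lambda>k. (xs ! k) \<odot>\<^bsub>M\<^esub> (\<lambda>k. a \<odot>\<^bsub>M\<^esub> m k) k) \<in> {..<length xs} \<rightarrow> carrier M"
      using v c assms(2) by (auto intro!: smult_closed)
    fix k assume "k \<in> {..<length xs}"
    then have k: "xs ! k \<in> carrier R" "m k \<in> carrier M" using c v by auto
    have "a \<odot>\<^bsub>M\<^esub> ((xs ! k) \<odot>\<^bsub>M\<^esub> m k) = (a \<otimes> xs ! k) \<odot>\<^bsub>M\<^esub> m k" using k assms(2) by (simp add: smult_assoc1)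
    also have "\<dots> = (xs ! k \<otimes> a) \<odot>\<^bsub>M\<^esub> m k" using k assms(2) R.m_comm by simp
    also have "\<dots> = (xs ! k) \<odot>\<^bsub>M\<^esub> (\<lambda>k. a \<odot>\<^bsub>M\<^esub> m k) k" using k assms(2) by (simp add: smult_assoc1)
    finally show "a \<odot>\<^bsub>M\<^esub> ((xs ! k) \<odot>\<^bsub>M\<^esub> m k) = (xs ! k) \<odot>\<^bsub>M\<^esub> (\<lambda>k. a \<odot>\<^bsub>M\<^esub> m k) k" .
  qed simp
  finally have eq: "a \<odot>\<^bsub>M\<^esub> v = finsum M (\<lambda>k. (xs ! k) \<odot>\<^bsub>M\<^esub> (\<lambda>k. a \<odot>\<^bsub>M\<^esub> m k) k) {..<length xs}" .
  moreover have "(\<lambda>k. a \<odot>\<^bsub>M\<^esub> m k) \<in> {..<length xs} \<rightarrow> carrier M" using v(2) assms(2) by auto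
  ultimately show ?thesis by (intro seq_submodI[of "\<lambda>k. a \<odot>\<^bsub>M\<^esub> m k"]) auto
qed

lemma xs_single:
  assumes "set xs \<subseteq> carrier R" "i < length xs" "v \<in> carrier M"
  shows "(xs ! i) \<odot>\<^bsub>M\<^esub> v \<in> seq_submod R M xs"
proof -
  define m where "m = (\<lambda>k. if k = i then v else \<zero>\<^bsub>M\<^esub>)"
  have c: "\<And>k. k < length xs \<Longrightarrow> xs ! k \<in> carrier R" using assms(1) by auto
  have "finsum M (\<lambda>k. (xs ! k) \<odot>\<^bsub>M\<^esub> m k) {..<length xs}
      = finsum M (\<lambda>k. if i = k then (xs ! k) \<odot>\<^bsub>M\<^esub> v else \<zero>\<^bsub>M\<^esub>) {..<length xs}"
    by (rule M.finsum_cong') (use c assms in \<open>auto simp: m_def\<close>)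
  also have "\<dots> = (xs ! i) \<odot>\<^bsub>M\<^esub> v"
    by (rule M.finsum_singleton) (use c assms in auto)
  finally have eq: "finsum M (\<lambda>k. (xs ! k) \<odot>\<^bsub>M\<^esub> m k) {..<length xs} = (xs ! i) \<odot>\<^bsub>M\<^esub> v" .
  moreover have "m \<in> {..<length xs} \<rightarrow> carrier M" using assms(3) by (auto simp: m_def)
  ultimately show ?thesis by (intro seq_submodI[of m]) simp_all
qed

end

definition linmap :: "'a ring \<Rightarrow> ('a,'b) module \<Rightarrow> ('a,'c) module \<Rightarrow> ('b \<Rightarrow> 'c) \<Rightarrow> bool" where
  "linmap R M N h \<longleftrightarrow> h \<in> carrier M \<rightarrow> carrier N \<and>
     (\<forall>x\<in>carrier M. \<forall>y\<in>carrier M. h (x \<oplus>\<^bsub>M\<^esub> y) = h x \<oplus>\<^bsub>N\<^esub> h y) \<and>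
     (\<forall>a\<in>carrier R. \<forall>x\<in>carrier M. h (a \<odot>\<^bsub>M\<^esub> x) = a \<odot>\<^bsub>N\<^esub> h x)"

lemma graded_hom_lin: "graded_hom S M MG N NG f \<Longrightarrow> linmap S M N f"
  unfolding graded_hom_def linmap_def by blast

lemma lin_zero:
  assumes "module R M" "module R N" "linmap R M N h"
  shows "h \<zero>\<^bsub>M\<^esub> = \<zero>\<^bsub>N\<^esub>"
proof -
  interpret M: smod R M by (simp add: smod_def assms(1))
  interpret N: smod R N by (simp add: smod_def assms(2))
  have c: "h \<zero>\<^bsub>M\<^esub> \<in> carrier N" using assms(3) unfolding linmap_def by auto
  have ha: "\<And>x y. x \<in> carrier M \<Longrightarrow> y \<in> carrier M \<Longrightarrow> h (x \<oplus>\<^bsub>M\<^esub> y) = h x \<oplus>\<^bsub>N\<^esub> h y"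
    using assms(3) unfolding linmap_def by auto
  have "h \<zero>\<^bsub>M\<^esub> = h \<zero>\<^bsub>M\<^esub> \<oplus>\<^bsub>N\<^esub> h \<zero>\<^bsub>M\<^esub>" using ha[of "\<zero>\<^bsub>M\<^esub>" "\<zero>\<^bsub>M\<^esub>"] by simp
  then show ?thesis using c N.add.r_cancel_one' by blast
qed

lemma lin_neg:
  assumes "module R M" "module R N" "linmap R M N h" "x \<in> carrier M"
  shows "h (\<ominus>\<^bsub>M\<^esub> x) = \<ominus>\<^bsub>N\<^esub> h x"
proof -
  interpret M: smod R M by (simp add: smod_def assms(1))
  interpret N: smod R N by (simp add: smod_def assms(2))
  have c: "h x \<in> carrier N" "h (\<ominus>\<^bsub>M\<^esub> x) \<in> carrier N" using assms(3,4) unfolding linmap_def by auto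
  have "h (\<ominus>\<^bsub>M\<^esub> x) \<oplus>\<^bsub>N\<^esub> h x = h (\<ominus>\<^bsub>M\<^esub> x \<oplus>\<^bsub>M\<^esub> x)" using assms(3,4) unfolding linmap_def by auto
  also have "\<dots> = \<zero>\<^bsub>N\<^esub>" using assms(4) lin_zero[OF assms(1-3)] by (simp add: M.l_neg)
  finally have e: "h (\<ominus>\<^bsub>M\<^esub> x) \<oplus>\<^bsub>N\<^esub> h x = \<zero>\<^bsub>N\<^esub>" .
  show ?thesis using N.minus_equality[OF e c(1) c(2)] by (rule sym)
qed

lemma lin_finsum:
  assumes "module R M" "module R N" "linmap R M N h" "finite A" "f \<in> A \<rightarrow> carrier M"
  shows "h (finsum M f A) = finsum N (\<lambda>i. h (f i)) A"
  using assms(4,5)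
proof (induction A rule: finite_induct)
  case empty
  interpret M: smod R M by (simp add: smod_def assms(1))
  interpret N: smod R N by (simp add: smod_def assms(2))
  show ?case using lin_zero[OF assms(1-3)] by simp
next
  case (insert a A)
  interpret M: smod R M by (simp add: smod_def assms(1))
  interpret N: smod R N by (simp add: smod_def assms(2))
  have hc: "h \<in> carrier M \<rightarrow> carrier N" and ha: "\<And>x y. x \<in> carrier M \<Longrightarrow> y \<in> carrier M \<Longrightarrow> h (x \<oplus>\<^bsub>M\<^esub> y) = h x \<oplus>\<^bsub>N\<^esub> h y"
    using assms(3) unfolding linmap_def by auto
  have f: "f \<in> A \<rightarrow> carrier M" "f a \<in> carrier M" using insert by auto
  have "h (finsum M f (insert a A)) = h (f a \<oplus>\<^bsub>M\<^esub> finsum M f A)"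
    using insert f by (simp add: M.finsum_insert)
  also have "\<dots> = h (f a) \<oplus>\<^bsub>N\<^esub> finsum N (\<lambda>i. h (f i)) A"
    using ha f insert.IH by simp
  also have "\<dots> = finsum N (\<lambda>i. h (f i)) (insert a A)"
    using insert f hc by (subst N.finsum_insert) auto
  finally show ?case .
qed

lemma lin_xs:
  assumes "module R M" "module R N" "linmap R M N h" "set xs \<subseteq> carrier R" "v \<in> seq_submod R M xs"
  shows "h v \<in> seq_submod R N xs"
proof -
  interpret M: smod R M by (simp add: smod_def assms(1))
  interpret N: smod R N by (simp add: smod_def assms(2))
  have hc: "h \<in> carrier M \<rightarrow> carrier N"
    and hs: "\<And>a x. a \<in> carrier R \<Longrightarrow> x \<in> carrier M \<Longrightarrow> h (a \<odot>\<^bsub>M\<^esub> x) = a \<odot>\<^bsub>N\<^esub> h x"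
    using assms(3) unfolding linmap_def by auto
  obtain m where v: "v = finsum M (\<lambda>k. (xs ! k) \<odot>\<^bsub>M\<^esub> m k) {..<length xs}"
    "m \<in> {..<length xs} \<rightarrow> carrier M" using assms(5) unfolding seq_submod_def by blast
  have c: "\<And>k. k < length xs \<Longrightarrow> xs ! k \<in> carrier R" using assms(4) by auto
  have "h v = finsum N (\<lambda>k. h ((xs ! k) \<odot>\<^bsub>M\<^esub> m k)) {..<length xs}"
    unfolding v(1) using c v(2) by (intro lin_finsum[OF assms(1-3)]) auto
  also have "\<dots> = finsum N (\<lambda>k. (xs ! k) \<odot>\<^bsub>N\<^esub> (\<lambda>k. h (m k)) k) {..<length xs}"
  proof (rule N.finsum_cong')
    fix k assume "k \<in> {..<length xs}"
    then have "xs ! k \<in> carrier R" "m k \<in> carrier M" using c v(2) by auto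
    then show "h ((xs ! k) \<odot>\<^bsub>M\<^esub> m k) = (xs ! k) \<odot>\<^bsub>N\<^esub> (\<lambda>k. h (m k)) k" using hs by simp
  qed (use c v(2) hc in auto)
  finally have eq: "h v = finsum N (\<lambda>k. (xs ! k) \<odot>\<^bsub>N\<^esub> (\<lambda>k. h (m k)) k) {..<length xs}" .
  moreover have "(\<lambda>k. h (m k)) \<in> {..<length xs} \<rightarrow> carrier N" using v(2) hc by auto
  ultimately show ?thesis by (intro N.seq_submodI[of "\<lambda>k. h (m k)"]) auto
qed

lemma lin_xs_surj:
  assumes "module R M" "module R N" "linmap R M N h" "set xs \<subseteq> carrier R" "h ` carrier M = carrier N"
    "w \<in> seq_submod R N xs"
  shows "\<exists>v\<in>seq_submod R M xs. h v = w"
proof -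
  interpret M: smod R M by (simp add: smod_def assms(1))
  interpret N: smod R N by (simp add: smod_def assms(2))
  have hs: "\<And>a x. a \<in> carrier R \<Longrightarrow> x \<in> carrier M \<Longrightarrow> h (a \<odot>\<^bsub>M\<^esub> x) = a \<odot>\<^bsub>N\<^esub> h x"
    using assms(3) unfolding linmap_def by auto
  obtain m where w: "w = finsum N (\<lambda>k. (xs ! k) \<odot>\<^bsub>N\<^esub> m k) {..<length xs}"
    "m \<in> {..<length xs} \<rightarrow> carrier N" using assms(6) unfolding seq_submod_def by blast
  have c: "\<And>k. k < length xs \<Longrightarrow> xs ! k \<in> carrier R" using assms(4) by auto
  have ex: "\<forall>k\<in>{..<length xs}. \<exists>y. y \<in> carrier M \<and> h y = m k"
  proof
    fix k assume "k \<in> {..<length xs}"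
    then have "m k \<in> carrier N" using w(2) by blast
    then show "\<exists>y. y \<in> carrier M \<and> h y = m k" using assms(5) by (metis imageE)
  qed
  obtain m' where m': "\<forall>k\<in>{..<length xs}. m' k \<in> carrier M \<and> h (m' k) = m k"
    using bchoice[OF ex] by blast
  have mc: "m' \<in> {..<length xs} \<rightarrow> carrier M" using m' by blast
  define v where "v = finsum M (\<lambda>k. (xs ! k) \<odot>\<^bsub>M\<^esub> m' k) {..<length xs}"
  have "v \<in> seq_submod R M xs" by (rule M.seq_submodI[OF mc v_def])
  moreover have "h v = w"
  proof -
    have "h v = finsum N (\<lambda>k. h ((xs ! k) \<odot>\<^bsub>M\<^esub> m' k)) {..<length xs}"
      unfolding v_def by (rule lin_finsum[OF assms(1-3)]) (use c mc in auto)
    also have "\<dots> = finsum N (\<lambda>k. (xs ! k) \<odot>\<^bsub>N\<^esub> m k) {..<length xs}"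
    proof (rule N.finsum_cong')
      fix k assume k: "k \<in> {..<length xs}"
      then have "xs ! k \<in> carrier R" "m' k \<in> carrier M" "h (m' k) = m k" using c m' by auto
      then show "h ((xs ! k) \<odot>\<^bsub>M\<^esub> m' k) = (xs ! k) \<odot>\<^bsub>N\<^esub> m k" using hs by simp
    qed (use c w(2) in auto)
    finally show ?thesis using w(1) by simp
  qed
  ultimately show ?thesis by blast
qed

context smod
begin

lemma finsum_in:
  assumes "finite A" "\<And>i. i \<in> A \<Longrightarrow> h i \<in> L" "\<zero>\<^bsub>M\<^esub> \<in> L"
    "\<And>x y. x \<in> L \<Longrightarrow> y \<in> L \<Longrightarrow> x \<oplus>\<^bsub>M\<^esub> y \<in> L" "L \<subseteq> carrier M"
  shows "finsum M h A \<in> L"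
  using assms(1,2)
proof (induction A rule: finite_induct)
  case empty then show ?case using assms(3) by simp
next
  case (insert a A)
  have "h \<in> A \<rightarrow> carrier M" "h a \<in> carrier M" using insert.prems assms(5) by auto
  then have "finsum M h (insert a A) = h a \<oplus>\<^bsub>M\<^esub> finsum M h A" using insert by (simp add: M.finsum_insert)
  then show ?case using insert assms(4) by simp
qed

lemma common_s:
  assumes "primeideal P R" "finite G" "\<forall>g\<in>G. \<exists>s\<in>carrier R - P. s \<odot>\<^bsub>M\<^esub> g \<in> XX"
    "\<And>a x. a \<in> carrier R \<Longrightarrow> x \<in> XX \<Longrightarrow> a \<odot>\<^bsub>M\<^esub> x \<in> XX" "G \<subseteq> carrier M"
  shows "\<exists>s\<in>carrier R - P. \<forall>g\<in>G. s \<odot>\<^bsub>M\<^esub> g \<in> XX"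
  using assms(2,3,5)
proof (induction G rule: finite_induct)
  case empty
  interpret P: primeideal P R by fact
  have "\<one> \<notin> P" using P.one_imp_carrier P.I_notcarr by blast
  then show ?case by auto
next
  case (insert g G)
  interpret P: primeideal P R by fact
  obtain s1 where s1: "s1 \<in> carrier R - P" "\<forall>h\<in>G. s1 \<odot>\<^bsub>M\<^esub> h \<in> XX" using insert by auto
  obtain s2 where s2: "s2 \<in> carrier R - P" "s2 \<odot>\<^bsub>M\<^esub> g \<in> XX" using insert.prems by auto
  have "s1 \<otimes> s2 \<in> carrier R - P" using s1 s2 P.I_prime by auto
  moreover have "(s1 \<otimes> s2) \<odot>\<^bsub>M\<^esub> g \<in> XX" using s1 s2 insert.prems assms(4) by (simp add: smult_assoc1)
  moreover have "(s1 \<otimes> s2) \<odot>\<^bsub>M\<^esub> h \<in> XX" if "h \<in> G" for h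
  proof -
    have hc: "h \<in> carrier M" using that insert.prems by auto
    have "(s1 \<otimes> s2) \<odot>\<^bsub>M\<^esub> h = (s2 \<otimes> s1) \<odot>\<^bsub>M\<^esub> h"
      using s1 s2 R.m_comm by simp
    also have "\<dots> = s2 \<odot>\<^bsub>M\<^esub> (s1 \<odot>\<^bsub>M\<^esub> h)"
      using s1 s2 hc by (simp add: smult_assoc1)
    finally have "(s1 \<otimes> s2) \<odot>\<^bsub>M\<^esub> h = s2 \<odot>\<^bsub>M\<^esub> (s1 \<odot>\<^bsub>M\<^esub> h)" .
    then show ?thesis using s1 s2 that assms(4) by simp
  qed
  ultimately show ?case by blast
qed

lemma X_lcs:
  assumes "ideal P R" "set xs \<subseteq> P" "Gs \<subseteq> carrier M" "finite Gs"
    "carrier M = {finsum M (\<lambda>x. a x \<odot>\<^bsub>M\<^esub> x) Gs | a. a \<in> Gs \<rightarrow> carrier R}"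
    "v \<in> seq_submod R M xs"
  shows "v \<in> lcs M P Gs {\<zero>\<^bsub>M\<^esub>}"
proof -
  have Pc: "P \<subseteq> carrier R" using assms(1) by (meson additive_subgroup.a_subset ideal.axioms(1))
  let ?L = "lcs M P Gs {\<zero>\<^bsub>M\<^esub>}"
  have Lc: "?L \<subseteq> carrier M" using lcs_carrier[OF Pc assms(3), of "{\<zero>\<^bsub>M\<^esub>}"] by auto
  have z: "\<zero>\<^bsub>M\<^esub> \<in> ?L" by (rule lcs.base) simp
  have ad: "\<And>x y. x \<in> ?L \<Longrightarrow> y \<in> ?L \<Longrightarrow> x \<oplus>\<^bsub>M\<^esub> y \<in> ?L" by (rule lcs.add)
  obtain m where v: "v = finsum M (\<lambda>k. (xs ! k) \<odot>\<^bsub>M\<^esub> m k) {..<length xs}"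
    "m \<in> {..<length xs} \<rightarrow> carrier M" using assms(6) unfolding seq_submod_def by blast
  have "(xs ! k) \<odot>\<^bsub>M\<^esub> m k \<in> ?L" if k: "k < length xs" for k
  proof -
    have xP: "xs ! k \<in> P" using k assms(2) by auto
    then have xc: "xs ! k \<in> carrier R" using Pc by auto
    have "m k \<in> carrier M" using k v(2) by auto
    then obtain a where a: "a \<in> Gs \<rightarrow> carrier R" "m k = finsum M (\<lambda>x. a x \<odot>\<^bsub>M\<^esub> x) Gs"
      using assms(5) by blast
    have "(xs ! k) \<odot>\<^bsub>M\<^esub> m k = finsum M (\<lambda>x. (xs ! k) \<odot>\<^bsub>M\<^esub> (a x \<odot>\<^bsub>M\<^esub> x)) Gs"
      unfolding a(2) using a(1) assms(3,4) xc by (subst finsum_smult_ldistr) auto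
    also have "\<dots> \<in> ?L"
    proof (rule finsum_in[OF assms(4) _ z ad Lc])
      fix x assume x: "x \<in> Gs"
      then have "(xs ! k) \<odot>\<^bsub>M\<^esub> (a x \<odot>\<^bsub>M\<^esub> x) = (xs ! k \<otimes> a x) \<odot>\<^bsub>M\<^esub> x"
      proof -
        have "a x \<in> carrier R" "x \<in> carrier M" using a(1) assms(3) x by auto
        then show ?thesis using xc by (simp add: smult_assoc1)
      qed
      moreover have "xs ! k \<otimes> a x \<in> P" using xP a(1) x assms(1) by (auto intro: ideal.I_r_closed)
      ultimately show "(xs ! k) \<odot>\<^bsub>M\<^esub> (a x \<odot>\<^bsub>M\<^esub> x) \<in> ?L" using x by (simp add: lcs.gen)
    qed
    finally show ?thesis .
  qed
  then show ?thesis unfolding v(1) by (intro finsum_in[OF _ _ z ad Lc]) auto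
qed

lemma ann_all:
  assumes "Gs \<subseteq> carrier M" "finite Gs"
    "carrier M = {finsum M (\<lambda>x. a x \<odot>\<^bsub>M\<^esub> x) Gs | a. a \<in> Gs \<rightarrow> carrier R}"
    "r \<in> carrier R" "\<forall>g\<in>Gs. r \<odot>\<^bsub>M\<^esub> g = \<zero>\<^bsub>M\<^esub>" "m \<in> carrier M"
  shows "r \<odot>\<^bsub>M\<^esub> m = \<zero>\<^bsub>M\<^esub>"
proof -
  obtain a where a: "a \<in> Gs \<rightarrow> carrier R" "m = finsum M (\<lambda>x. a x \<odot>\<^bsub>M\<^esub> x) Gs"
    using assms(3,6) by blast
  have "r \<odot>\<^bsub>M\<^esub> m = finsum M (\<lambda>x. r \<odot>\<^bsub>M\<^esub> (a x \<odot>\<^bsub>M\<^esub> x)) Gs"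
    unfolding a(2) using a(1) assms(1,2,4) by (subst finsum_smult_ldistr) auto
  also have "\<dots> = \<zero>\<^bsub>M\<^esub>"
  proof (rule M.add.finprod_one_eqI)
    fix x assume x: "x \<in> Gs"
    then have c: "a x \<in> carrier R" "x \<in> carrier M" using a(1) assms(1) by auto
    have "r \<odot>\<^bsub>M\<^esub> (a x \<odot>\<^bsub>M\<^esub> x) = (r \<otimes> a x) \<odot>\<^bsub>M\<^esub> x" using c assms(4) by (simp add: smult_assoc1)
    also have "\<dots> = (a x \<otimes> r) \<odot>\<^bsub>M\<^esub> x" using c assms(4) R.m_comm by simp
    also have "\<dots> = a x \<odot>\<^bsub>M\<^esub> (r \<odot>\<^bsub>M\<^esub> x)" using c assms(4) by (simp add: smult_assoc1)
    also have "\<dots> = \<zero>\<^bsub>M\<^esub>" using x assms(5) c by simp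
    finally show "r \<odot>\<^bsub>M\<^esub> (a x \<odot>\<^bsub>M\<^esub> x) = \<zero>\<^bsub>M\<^esub>" .
  qed
  finally show ?thesis .
qed

end

lemma dim_leD:
  assumes "dim_le Ps k" "\<forall>i\<le>n. c i \<in> Ps" "\<forall>i<n. c i \<subset> c (Suc i)"
  shows "n \<le> k"
  using assms unfolding dim_le_def by blast

lemma dim_le_mono:
  assumes "dim_le C k" "A \<subseteq> C" shows "dim_le A k"
  unfolding dim_le_def
proof (intro allI impI)
  fix c :: "nat \<Rightarrow> 'a set" and n
  assume ch: "(\<forall>i\<le>n. c i \<in> A) \<and> (\<forall>i<n. c i \<subset> c (Suc i))"
  then have "\<forall>i\<le>n. c i \<in> C" using assms(2) by blast
  then show "n \<le> k" using dim_leD[OF assms(1)] ch by blast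
qed

lemma dim_combine:
  assumes "A \<subseteq> C" "B \<subseteq> C" "C \<subseteq> A \<union> B"
    "\<And>P Q. P \<in> A \<Longrightarrow> Q \<in> C \<Longrightarrow> P \<subseteq> Q \<Longrightarrow> Q \<in> A"
    "\<And>P Q. P \<in> B \<Longrightarrow> Q \<in> C \<Longrightarrow> P \<subseteq> Q \<Longrightarrow> Q \<in> B"
  shows "dim_le C 0 \<longleftrightarrow> dim_le A 0 \<and> dim_le B 0"
proof
  assume "dim_le C 0"
  then show "dim_le A 0 \<and> dim_le B 0" using assms(1,2) dim_le_mono by blast
next
  assume h: "dim_le A 0 \<and> dim_le B 0"
  show "dim_le C 0" unfolding dim_le_def
  proof (intro allI impI)
    fix c :: "nat \<Rightarrow> 'a set" and n
    assume ch: "(\<forall>i\<le>n. c i \<in> C) \<and> (\<forall>i<n. c i \<subset> c (Suc i))"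
    show "n \<le> 0"
    proof (rule ccontr)
      assume "\<not> n \<le> 0"
      then have n: "0 < n" by simp
      have c0: "c 0 \<in> C" using ch by blast
      have c1: "c 1 \<in> C" using ch n by auto
      have sub: "c 0 \<subset> c 1" using ch n by auto
      have le1: "\<forall>i<(1::nat). c i \<subset> c (Suc i)" using sub by simp
      show False
      proof (cases "c 0 \<in> A")
        case True
        have "c 1 \<in> A" using assms(4)[OF True c1] sub by blast
        then have "\<forall>i\<le>(1::nat). c i \<in> A" using True by (simp add: le_Suc_eq)
        from dim_leD[OF conjunct1[OF h] this le1] show False by simp
      next
        case False
        then have B0: "c 0 \<in> B" using c0 assms(3) by blast
        have "c 1 \<in> B" using assms(5)[OF B0 c1] sub by blast
        then have "\<forall>i\<le>(1::nat). c i \<in> B" using B0 by (simp add: le_Suc_eq)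
        from dim_leD[OF conjunct2[OF h] this le1] show False by simp
      qed
    qed
  qed
qed

lemma supp_iff:
  assumes "P \<in> supp_pp_quot S SG F N"
  shows "P \<in> supp_pp_quot S SG F' N' \<longleftrightarrow> (\<exists>m\<in>carrier F'. \<forall>s\<in>carrier S - P. s \<odot>\<^bsub>F'\<^esub> m \<notin> N')"
  using assms unfolding supp_pp_quot_def mem_Collect_eq by (intro iffI) (simp_all only: simp_thms)

lemma supp_wit:
  assumes "P \<in> supp_pp_quot S SG F N"
  shows "\<exists>m\<in>carrier F. \<forall>s\<in>carrier S - P. s \<odot>\<^bsub>F\<^esub> m \<notin> N"
  using supp_iff[OF assms] assms by blast

lemma supp_prime:
  assumes "P \<in> supp_pp_quot S SG F N" shows "primeideal P S"
  using assms unfolding supp_pp_quot_def by simp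

lemma supp_up:
  assumes "P \<in> supp_pp_quot S SG F N" "Q \<in> supp_pp_quot S SG F' N'" "P \<subseteq> Q"
  shows "Q \<in> supp_pp_quot S SG F N"
proof -
  from assms(1) obtain m where m: "m \<in> carrier F" "\<forall>s\<in>carrier S - P. s \<odot>\<^bsub>F\<^esub> m \<notin> N"
    unfolding supp_pp_quot_def by blast
  have "\<forall>s\<in>carrier S - Q. s \<odot>\<^bsub>F\<^esub> m \<notin> N" using m(2) assms(3) by blast
  then show ?thesis using assms(2) m(1) unfolding supp_pp_quot_def by blast
qed

lemma supp_M2:
  assumes "module S M" "module S M2" "linmap S M M2 g" "g ` carrier M = carrier M2"
    "set xs \<subseteq> carrier S" "P \<in> supp_pp_quot S SG M2 (seq_submod S M2 xs)"
  shows "P \<in> supp_pp_quot S SG M (seq_submod S M xs)"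
proof -
  interpret M: smod S M by (simp add: smod_def assms(1))
  interpret M2: smod S M2 by (simp add: smod_def assms(2))
  from supp_wit[OF assms(6)] obtain m2 where m2: "m2 \<in> carrier M2" "\<forall>s\<in>carrier S - P. s \<odot>\<^bsub>M2\<^esub> m2 \<notin> seq_submod S M2 xs"
    by blast
  have "m2 \<in> g ` carrier M" using m2(1) assms(4) by simp
  then obtain m where m: "m \<in> carrier M" "g m = m2" by (metis imageE)
  have "s \<odot>\<^bsub>M\<^esub> m \<notin> seq_submod S M xs" if s: "s \<in> carrier S - P" for s
  proof
    assume "s \<odot>\<^bsub>M\<^esub> m \<in> seq_submod S M xs"
    then have "g (s \<odot>\<^bsub>M\<^esub> m) \<in> seq_submod S M2 xs" by (rule lin_xs[OF assms(1-3,5)])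
    moreover have "g (s \<odot>\<^bsub>M\<^esub> m) = s \<odot>\<^bsub>M2\<^esub> m2" using assms(3) s m unfolding linmap_def by auto
    ultimately show False using m2(2) s by auto
  qed
  then have "\<forall>s\<in>carrier S - P. s \<odot>\<^bsub>M\<^esub> m \<notin> seq_submod S M xs" by blast
  then show ?thesis using supp_iff[OF assms(6)] m(1) by blast
qed

lemma supp_M1:
  assumes "module S M1" "module S M" "linmap S M1 M f" "inj_on f (carrier M1)" "fg_module S M"
    "set xs \<subseteq> carrier S" "P \<in> supp_pp_quot S SG M1 (seq_submod S M1 xs)"
  shows "P \<in> supp_pp_quot S SG M (seq_submod S M xs)"
proof -
  interpret M: smod S M by (simp add: smod_def assms(2))
  interpret M1: smod S M1 by (simp add: smod_def assms(1))
  have Pp: "primeideal P S" using supp_prime[OF assms(7)] .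
  interpret P: primeideal P S by (rule Pp)
  from supp_wit[OF assms(7)] obtain m1 where m1: "m1 \<in> carrier M1" "\<forall>s\<in>carrier S - P. s \<odot>\<^bsub>M1\<^esub> m1 \<notin> seq_submod S M1 xs"
    by blast
  have xsP: "set xs \<subseteq> P"
  proof
    fix x assume "x \<in> set xs"
    then obtain i where i: "i < length xs" "x = xs ! i" by (metis in_set_conv_nth)
    show "x \<in> P"
    proof (rule ccontr)
      assume "x \<notin> P"
      moreover have "x \<in> carrier S" using assms(6) \<open>x \<in> set xs\<close> by auto
      moreover have "x \<odot>\<^bsub>M1\<^esub> m1 \<in> seq_submod S M1 xs" using M1.xs_single[OF assms(6) i(1) m1(1)] i(2) by simp
      ultimately show False using m1(2) by blast
    qed
  qed
  show ?thesis
  proof (rule ccontr)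
    assume nP: "P \<notin> supp_pp_quot S SG M (seq_submod S M xs)"
    have all: "\<forall>m\<in>carrier M. \<exists>s\<in>carrier S - P. s \<odot>\<^bsub>M\<^esub> m \<in> seq_submod S M xs"
      using nP supp_iff[OF assms(7), of M "seq_submod S M xs"] by blast
    obtain Gs where Gs: "finite Gs" "Gs \<subseteq> carrier M"
      "carrier M = {finsum M (\<lambda>x. a x \<odot>\<^bsub>M\<^esub> x) Gs | a. a \<in> Gs \<rightarrow> carrier S}"
      using assms(5) unfolding fg_module_def by blast
    have "\<exists>s\<in>carrier S - P. \<forall>g\<in>Gs. s \<odot>\<^bsub>M\<^esub> g \<in> seq_submod S M xs"
      by (rule M.common_s[OF Pp Gs(1) _ M.xs_smult[OF assms(6)] Gs(2)]) (use all Gs(2) in blast)+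
    then obtain s where s: "s \<in> carrier S" "s \<notin> P" "\<forall>g\<in>Gs. s \<odot>\<^bsub>M\<^esub> g \<in> seq_submod S M xs" by blast
    have "\<forall>g\<in>Gs. s \<odot>\<^bsub>M\<^esub> g \<in> lcs M P Gs {\<zero>\<^bsub>M\<^esub>}"
      using s(3) M.X_lcs[OF P.is_ideal xsP Gs(2) Gs(1) Gs(3)] by blast
    moreover have "subm S M {\<zero>\<^bsub>M\<^esub>}" by (rule M.subm_I) auto
    ultimately obtain r where r: "r \<in> carrier S" "r \<notin> P" "\<forall>g\<in>Gs. r \<odot>\<^bsub>M\<^esub> g \<in> {\<zero>\<^bsub>M\<^esub>}"
      using M.nak[OF Pp Gs(1) Gs(2) _ s(1) s(2)] by blast
    have ann: "r \<odot>\<^bsub>M\<^esub> m = \<zero>\<^bsub>M\<^esub>" if "m \<in> carrier M" for m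
      using M.ann_all[OF Gs(2) Gs(1) Gs(3) r(1) _ that] r(3) by blast
    have fm: "f m1 \<in> carrier M" "f (r \<odot>\<^bsub>M1\<^esub> m1) = r \<odot>\<^bsub>M\<^esub> f m1"
      using assms(3) m1(1) r(1) unfolding linmap_def by auto
    have "f (r \<odot>\<^bsub>M1\<^esub> m1) = f \<zero>\<^bsub>M1\<^esub>" using fm ann lin_zero[OF assms(1-3)] by simp
    then have "r \<odot>\<^bsub>M1\<^esub> m1 = \<zero>\<^bsub>M1\<^esub>" using assms(4) m1(1) r(1) by (simp add: inj_on_eq_iff)
    then have "r \<odot>\<^bsub>M1\<^esub> m1 \<in> seq_submod S M1 xs" using M1.xs_zero[OF assms(6)] by simp
    then show False using m1(2) r by blast
  qed
qed

lemma supp_M: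
  assumes "module S M1" "module S M" "module S M2" "linmap S M1 M f" "linmap S M M2 g"
    "short_exact M1 M M2 f g" "set xs \<subseteq> carrier S" "P \<in> supp_pp_quot S SG M (seq_submod S M xs)"
  shows "P \<in> supp_pp_quot S SG M1 (seq_submod S M1 xs) \<or> P \<in> supp_pp_quot S SG M2 (seq_submod S M2 xs)"
proof (rule ccontr)
  interpret M: smod S M by (simp add: smod_def assms(2))
  interpret M1: smod S M1 by (simp add: smod_def assms(1))
  interpret M2: smod S M2 by (simp add: smod_def assms(3))
  have Pp: "primeideal P S" using supp_prime[OF assms(8)] .
  interpret P: primeideal P S by (rule Pp)
  assume "\<not> ?thesis"
  then have nC1: "P \<notin> supp_pp_quot S SG M1 (seq_submod S M1 xs)"
    and nC2: "P \<notin> supp_pp_quot S SG M2 (seq_submod S M2 xs)" by auto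
  have np1: "\<not> (\<exists>m\<in>carrier M1. \<forall>s\<in>carrier S - P. s \<odot>\<^bsub>M1\<^esub> m \<notin> seq_submod S M1 xs)"
    using nC1 supp_iff[OF assms(8), of M1 "seq_submod S M1 xs"] by blast
  have np2: "\<not> (\<exists>m\<in>carrier M2. \<forall>s\<in>carrier S - P. s \<odot>\<^bsub>M2\<^esub> m \<notin> seq_submod S M2 xs)"
    using nC2 supp_iff[OF assms(8), of M2 "seq_submod S M2 xs"] by blast
  have n1: "\<forall>m\<in>carrier M1. \<exists>s\<in>carrier S - P. s \<odot>\<^bsub>M1\<^esub> m \<in> seq_submod S M1 xs"
    using np1 by blast
  have n2: "\<forall>m\<in>carrier M2. \<exists>s\<in>carrier S - P. s \<odot>\<^bsub>M2\<^esub> m \<in> seq_submod S M2 xs"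
    using np2 by blast
  from supp_wit[OF assms(8)] obtain m where m: "m \<in> carrier M" "\<forall>s\<in>carrier S - P. s \<odot>\<^bsub>M\<^esub> m \<notin> seq_submod S M xs"
    by blast
  have gc: "g \<in> carrier M \<rightarrow> carrier M2"
    and ga: "\<And>x y. x \<in> carrier M \<Longrightarrow> y \<in> carrier M \<Longrightarrow> g (x \<oplus>\<^bsub>M\<^esub> y) = g x \<oplus>\<^bsub>M2\<^esub> g y"
    and gs: "\<And>a x. a \<in> carrier S \<Longrightarrow> x \<in> carrier M \<Longrightarrow> g (a \<odot>\<^bsub>M\<^esub> x) = a \<odot>\<^bsub>M2\<^esub> g x"
    using assms(5) unfolding linmap_def by auto
  have fc: "f \<in> carrier M1 \<rightarrow> carrier M"
    and fs: "\<And>a x. a \<in> carrier S \<Longrightarrow> x \<in> carrier M1 \<Longrightarrow> f (a \<odot>\<^bsub>M1\<^esub> x) = a \<odot>\<^bsub>M\<^esub> f x"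
    using assms(4) unfolding linmap_def by auto
  have ex: "g ` carrier M = carrier M2" "f ` carrier M1 = {y \<in> carrier M. g y = \<zero>\<^bsub>M2\<^esub>}"
    using assms(6) unfolding short_exact_def by auto
  have "g m \<in> carrier M2" using gc m(1) by auto
  then obtain s where s: "s \<in> carrier S" "s \<notin> P" "s \<odot>\<^bsub>M2\<^esub> g m \<in> seq_submod S M2 xs" using n2 by blast
  obtain z where z: "z \<in> seq_submod S M xs" "g z = s \<odot>\<^bsub>M2\<^esub> g m"
    using lin_xs_surj[OF assms(2,3,5,7) ex(1) s(3)] by blast
  have zc: "z \<in> carrier M" using z(1) M.xs_carrier[OF assms(7)] by auto
  have smc: "s \<odot>\<^bsub>M\<^esub> m \<in> carrier M" using s m by simp
  define w where "w = s \<odot>\<^bsub>M\<^esub> m \<oplus>\<^bsub>M\<^esub> \<ominus>\<^bsub>M\<^esub> z"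
  have wc: "w \<in> carrier M" using w_def zc smc by simp
  have "g w = g (s \<odot>\<^bsub>M\<^esub> m) \<oplus>\<^bsub>M2\<^esub> \<ominus>\<^bsub>M2\<^esub> g z"
    using w_def zc smc ga lin_neg[OF assms(2,3,5) zc] by simp
  also have "\<dots> = \<zero>\<^bsub>M2\<^esub>" using z(2) gs s m \<open>g m \<in> carrier M2\<close> by (simp add: M2.r_neg)
  finally have "w \<in> {y \<in> carrier M. g y = \<zero>\<^bsub>M2\<^esub>}" using wc by simp
  then have "w \<in> f ` carrier M1" using ex(2) by simp
  then obtain m1 where m1: "m1 \<in> carrier M1" "f m1 = w" by blast
  then obtain t where t: "t \<in> carrier S" "t \<notin> P" "t \<odot>\<^bsub>M1\<^esub> m1 \<in> seq_submod S M1 xs" using n1 by blast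
  have "f (t \<odot>\<^bsub>M1\<^esub> m1) \<in> seq_submod S M xs" using lin_xs[OF assms(1,2,4,7) t(3)] .
  then have tw: "t \<odot>\<^bsub>M\<^esub> w \<in> seq_submod S M xs" using fs t m1 by simp
  have "s \<odot>\<^bsub>M\<^esub> m = w \<oplus>\<^bsub>M\<^esub> z" using w_def zc smc by (simp add: M.a_assoc M.l_neg)
  then have "(t \<otimes>\<^bsub>S\<^esub> s) \<odot>\<^bsub>M\<^esub> m = t \<odot>\<^bsub>M\<^esub> w \<oplus>\<^bsub>M\<^esub> t \<odot>\<^bsub>M\<^esub> z"
    using t s m wc zc by (simp add: M.smult_assoc1 M.smult_r_distr)
  also have "\<dots> \<in> seq_submod S M xs"
    using M.xs_add[OF assms(7) tw M.xs_smult[OF assms(7) t(1) z(1)]] .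
  finally have "(t \<otimes>\<^bsub>S\<^esub> s) \<odot>\<^bsub>M\<^esub> m \<in> seq_submod S M xs" .
  moreover have "t \<otimes>\<^bsub>S\<^esub> s \<in> carrier S - P" using t s P.I_prime by auto
  ultimately show False using m(2) by blast
qed

theorem lemma3p4:
  fixes S :: "'a ring" and SG :: "('d::finite \<Rightarrow> nat) \<Rightarrow> 'a set"
    and M1 :: "('a, 'b) module" and M1G :: "('d \<Rightarrow> nat) \<Rightarrow> 'b set"
    and M :: "('a, 'c) module" and MG :: "('d \<Rightarrow> nat) \<Rightarrow> 'c set"
    and M2 :: "('a, 'e) module" and M2G :: "('d \<Rightarrow> nat) \<Rightarrow> 'e set"
    and f :: "'b \<Rightarrow> 'c" and g :: "'c \<Rightarrow> 'e"
    and xs :: "'a list"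
  assumes "standard_graded S SG" and "fg_algebra_over_deg0 S SG"
    and "artinian (deg0_ring S SG)" and "local_ring (deg0_ring S SG)"
    and "infinite_residue_field (deg0_ring S SG)"
    and "graded_module S SG M1 M1G" and "fg_module S M1"
    and "graded_module S SG M MG" and "fg_module S M"
    and "graded_module S SG M2 M2G" and "fg_module S M2"
    and "graded_hom S M1 M1G M MG f" and "graded_hom S M MG M2 M2G g"
    and "short_exact M1 M M2 f g"
    and "set xs \<subseteq> (\<Union>i. SG (unitdeg i))"
  shows "mm_system S SG M xs \<longleftrightarrow> (mm_system S SG M1 xs \<and> mm_system S SG M2 xs)"
proof -
  have mod1: "module S M1" and mod: "module S M" and mod2: "module S M2"
    using assms(6,8,10) unfolding graded_module_def by auto
  have lf: "linmap S M1 M f" and lg: "linmap S M M2 g"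
    using assms(12,13) by (auto intro: graded_hom_lin)
  have inj: "inj_on f (carrier M1)" and surj: "g ` carrier M = carrier M2"
    using assms(14) unfolding short_exact_def by auto
  have "\<And>n. SG n \<subseteq> carrier S"
    using assms(1) unfolding standard_graded_def graded_ring_def graded_decomp_def
    by (meson additive_subgroup.a_subset)
  then have xsc: "set xs \<subseteq> carrier S" using assms(15) by blast
  let ?C = "supp_pp_quot S SG M (seq_submod S M xs)"
  let ?A = "supp_pp_quot S SG M1 (seq_submod S M1 xs)"
  let ?B = "supp_pp_quot S SG M2 (seq_submod S M2 xs)"
  have "dim_le ?C 0 \<longleftrightarrow> dim_le ?A 0 \<and> dim_le ?B 0"
  proof (rule dim_combine)
    show "?A \<subseteq> ?C" using supp_M1[OF mod1 mod lf inj assms(9) xsc] by blast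
    show "?B \<subseteq> ?C" using supp_M2[OF mod mod2 lg surj xsc] by blast
    show "?C \<subseteq> ?A \<union> ?B" using supp_M[OF mod1 mod mod2 lf lg assms(14) xsc] by blast
    show "\<And>P Q. P \<in> ?A \<Longrightarrow> Q \<in> ?C \<Longrightarrow> P \<subseteq> Q \<Longrightarrow> Q \<in> ?A" by (rule supp_up)
    show "\<And>P Q. P \<in> ?B \<Longrightarrow> Q \<in> ?C \<Longrightarrow> P \<subseteq> Q \<Longrightarrow> Q \<in> ?B" by (rule supp_up)
  qed
  then show ?thesis unfolding mm_system_def .
qed

end
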